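(* Let $n\ge 1$. Let $\bar\pi=\bar\pi(0,d_1,\dots,d_t)$ and $\bar\pi'=\bar\pi(0,d'_1,\dots,d'_u)$ be normalized pure diagrams with $0\le t,u\le n$, and suppose $\bar\pi<\bar\pi'$ in the partial order. Then $H(\bar\pi',t)-H(\bar\pi,t)$ is a nonzero power series all of whose coefficients are nonnegative; i.e. the Hilbert series is strictly increasing on the partially ordered set of normalized pure diagrams generated in degree zero.
   Context: For integers $d_0<\dots<d_t$, $0\le t\le n$, the pure diagram $\pi(d_0,\dots,d_t)=(\pi_{i,j})_{0\le i\le n,\,j\in\mathbb Z}$ has entry $(-1)^i\prod_{0\le j\le t,\,j\ne i}\frac{1}{d_j-d_i}$ at position $(i,d_i)$, $i=0,\dots,t$, and $0$ elsewhere. When $d_0=0$, the normalized pure diagram is $\bar\pi(0,d_1,\dots,d_t)=d_1d_2\cdots d_t\,\pi(0,d_1,\dots,d_t)$. Partial order: $\pi(d_0,\dots,d_t)\le\pi(d'_0,\dots,d'_u)$ iff $t\ge u$ and $d_i\le d'_i$ for $i=0,\dots,u$ (same for the normalized diagrams). For an array $\beta=(\beta_{i,j})$, its Hilbert series is $H(\beta,t)=\frac{1}{(1-t)^n}\sum_{i=0}^n\sum_j(-1)^i\beta_{i,j}t^j$, expanded as a power series in $t$. *)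

theory Defs
  imports "HOL-Computational_Algebra.Formal_Power_Series"
begin

text \<open>A degree sequence d_0 < ... < d_t is a list [d_0, ..., d_t] of integers
  (so t = length ds - 1).\<close>

definition strict_degs :: "int list \<Rightarrow> bool" where
  "strict_degs ds \<longleftrightarrow> ds \<noteq> [] \<and> sorted_wrt (<) ds"

definition pure_diagram :: "int list \<Rightarrow> nat \<Rightarrow> int \<Rightarrow> real" where
  "pure_diagram ds i j =
     (if i < length ds \<and> j = ds ! i
      then (-1) ^ i * (\<Prod>k\<in>{k. k < length ds \<and> k \<noteq> i}. 1 / real_of_int (ds ! k - ds ! i))
      else 0)"

definition norm_pure_diagram :: "int list \<Rightarrow> nat \<Rightarrow> int \<Rightarrow> real" where
  "norm_pure_diagram ds i j =
     (\<Prod>k\<in>{1..<length ds}. real_of_int (ds ! k)) * pure_diagram ds i j"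

definition degs_le :: "int list \<Rightarrow> int list \<Rightarrow> bool" where
  "degs_le ds ds' \<longleftrightarrow> length ds \<ge> length ds' \<and> (\<forall>i < length ds'. ds ! i \<le> ds' ! i)"

definition degs_less :: "int list \<Rightarrow> int list \<Rightarrow> bool" where
  "degs_less ds ds' \<longleftrightarrow> degs_le ds ds' \<and> ds \<noteq> ds'"

text \<open>Hilbert series H(beta,t) = (1-t)^(-n) * sum_i sum_j (-1)^i beta_{i,j} t^j,
  for arrays supported in nonnegative degrees (columns j = 0,1,2,...), 0 \<le> i \<le> n.\<close>
definition hilbert_series :: "nat \<Rightarrow> (nat \<Rightarrow> int \<Rightarrow> real) \<Rightarrow> real fps" where
  "hilbert_series n \<beta> =
     Abs_fps (\<lambda>j. \<Sum>i\<le>n. (-1) ^ i * \<beta> i (int j)) * inverse ((1 - fps_X) ^ n)"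

end

theory Submission
  imports Defs
begin

definition GG :: "int set \<Rightarrow> real fps" where
  "GG S = Abs_fps (\<lambda>j. if int j \<in> S then inverse (\<Prod>k\<in>S-{int j}. real_of_int (k - int j)) else 0)"

lemma GG_nth: "fps_nth (GG S) j = (if int j \<in> S then inverse (\<Prod>k\<in>S-{int j}. real_of_int (k - int j)) else 0)"
  by (simp add: GG_def)

lemma prod_nz: "finite S \<Longrightarrow> (\<Prod>k\<in>S-{x}. real_of_int (k - x)) \<noteq> 0"
  by (simp add: prod_zero_iff)

lemma aux_real: "u \<noteq> 0 \<Longrightarrow> v \<noteq> 0 \<Longrightarrow> (P::real) \<noteq> 0 \<Longrightarrow>
  (v - u) * inverse (u * v * P) = inverse (u * P) - inverse (v * P)"
  by (simp add: field_simps)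

lemma GG_rec:
  assumes "finite S" "a \<notin> S" "b \<notin> S" "a \<noteq> b"
  shows "fps_const (real_of_int (b - a)) * GG (insert a (insert b S)) = GG (insert a S) - GG (insert b S)"
proof (rule fps_ext)
  fix j
  define x where "x = int j"
  show "fps_nth (fps_const (real_of_int (b - a)) * GG (insert a (insert b S))) j = fps_nth (GG (insert a S) - GG (insert b S)) j"
  proof (cases "x = a")
    case True
    have e: "insert a (insert b S) - {a} = insert b S" "insert a S - {a} = S" using assms by auto
    have "(\<Prod>k\<in>insert b S. real_of_int (k - a)) = real_of_int (b - a) * (\<Prod>k\<in>S. real_of_int (k - a))"
      using assms by simp
    moreover have "(\<Prod>k\<in>S. real_of_int (k - a)) \<noteq> 0" using assms by (simp add: prod_zero_iff)
    ultimately show ?thesis using assms True unfolding fps_mult_left_const_nth fps_sub_nth GG_nth x_def[symmetric] e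
      by (simp add: field_simps)
  next
    case Fa: False
    show ?thesis
    proof (cases "x = b")
      case True
      have e: "insert a (insert b S) - {b} = insert a S" "insert b S - {b} = S" using assms by auto
      have "(\<Prod>k\<in>insert a S. real_of_int (k - b)) = real_of_int (a - b) * (\<Prod>k\<in>S. real_of_int (k - b))"
        using assms by simp
      moreover have "(\<Prod>k\<in>S. real_of_int (k - b)) \<noteq> 0" using assms by (simp add: prod_zero_iff)
      moreover have jb: "int j = b" using True x_def by simp
      ultimately show ?thesis using assms Fa unfolding fps_mult_left_const_nth fps_sub_nth GG_nth jb e
        by (simp add: field_simps)
    next
      case Fb: False
      show ?thesis
      proof (cases "x \<in> S")
        case True
        have e: "insert a (insert b S) - {x} = insert a (insert b (S - {x}))"
          "insert a S - {x} = insert a (S - {x})" "insert b S - {x} = insert b (S - {x})" using Fa Fb by auto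
        have p1: "(\<Prod>k\<in>insert a (insert b (S - {x})). real_of_int (k - x)) = real_of_int (a - x) * real_of_int (b - x) * (\<Prod>k\<in>S-{x}. real_of_int (k - x))"
          using assms by simp
        have p2: "(\<Prod>k\<in>insert a (S - {x}). real_of_int (k - x)) = real_of_int (a - x) * (\<Prod>k\<in>S-{x}. real_of_int (k - x))"
          using assms by simp
        have p3: "(\<Prod>k\<in>insert b (S - {x}). real_of_int (k - x)) = real_of_int (b - x) * (\<Prod>k\<in>S-{x}. real_of_int (k - x))"
          using assms by simp
        have nz: "(\<Prod>k\<in>S-{x}. real_of_int (k - x)) \<noteq> 0" using assms by (simp add: prod_zero_iff)
        have "real_of_int (a - x) \<noteq> 0" "real_of_int (b - x) \<noteq> 0" using Fa Fb by auto
        then show ?thesis using True nz unfolding fps_mult_left_const_nth fps_sub_nth GG_nth x_def[symmetric] e p1 p2 p3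
          using aux_real[of "real_of_int (a - x)" "real_of_int (b - x)" "\<Prod>k\<in>S-{x}. real_of_int (k - x)"]
          by simp
      next
        case False
        then show ?thesis using Fa Fb unfolding fps_mult_left_const_nth fps_sub_nth GG_nth x_def[symmetric] by simp
      qed
    qed
  qed
qed


lemma GG_interval: "0 \<le> x0 \<Longrightarrow> GG {x0..x0 + int m} = fps_const (1 / fact m) * fps_X ^ nat x0 * (1 - fps_X) ^ m"
proof (induction m arbitrary: x0)
  case 0
  show ?case
  proof (rule fps_ext)
    fix j
    show "fps_nth (GG {x0..x0 + int 0}) j = fps_nth (fps_const (1 / fact 0) * fps_X ^ nat x0 * (1 - fps_X) ^ 0) j"
      using 0 by (auto simp: GG_nth)
  qed
next
  case (Suc m)
  define S where "S = {x0+1..x0 + int m}"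
  define b where "b = x0 + int m + 1"
  have fS: "finite S" "x0 \<notin> S" "b \<notin> S" "x0 \<noteq> b" by (auto simp: S_def b_def)
  have e1: "{x0..x0 + int (Suc m)} = insert x0 (insert b S)" by (auto simp: S_def b_def)
  have e2: "insert x0 S = {x0..x0 + int m}" using Suc.prems by (auto simp: S_def)
  have e3: "insert b S = {(x0+1)..(x0+1) + int m}" by (auto simp: S_def b_def)
  have r: "fps_const (real_of_int (b - x0)) * GG {x0..x0 + int (Suc m)} = GG {x0..x0 + int m} - GG {(x0+1)..(x0+1) + int m}"
    using GG_rec[OF fS] unfolding e1 e2 e3 .
  have n1: "nat (x0 + 1) = Suc (nat x0)" "nat (1 + x0) = Suc (nat x0)" using Suc.prems by simp_all
  have ih2: "GG {(x0+1)..(x0+1) + int m} = fps_const (1 / fact m) * fps_X ^ nat (x0+1) * (1 - fps_X) ^ m"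
    using Suc.IH[of "x0+1"] Suc.prems by simp
  have "fps_const (real_of_int (b - x0)) * GG {x0..x0 + int (Suc m)} =
     fps_const (1 / fact m) * fps_X ^ nat x0 * (1 - fps_X) ^ Suc m"
    unfolding r Suc.IH[OF Suc.prems] ih2 using Suc.prems
    by (simp add: n1 algebra_simps)
  moreover have "real_of_int (b - x0) = real (Suc m)" by (simp add: b_def)
  ultimately have "fps_const (real (Suc m)) * GG {x0..x0 + int (Suc m)} =
     fps_const (1 / fact m) * fps_X ^ nat x0 * (1 - fps_X) ^ Suc m" by simp
  then have "fps_const (1 / real (Suc m)) * (fps_const (real (Suc m)) * GG {x0..x0 + int (Suc m)}) =
     fps_const (1 / real (Suc m)) * (fps_const (1 / fact m) * fps_X ^ nat x0 * (1 - fps_X) ^ Suc m)" by simp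
  then show ?case by (simp add: mult.assoc[symmetric] del: of_nat_Suc)
qed

definition pos :: "real fps \<Rightarrow> bool" where
  "pos Q \<longleftrightarrow> (\<forall>k. fps_nth Q k \<ge> 0) \<and> Q \<noteq> 0"

lemma comb_alg:
  assumes "(c1::'a::comm_ring) * Y = S - A" "c2 * Y = B - S" shows "(c1 + c2) * S = c2 * A + c1 * B"
proof -
  have "c2 * (c1 * Y) = c1 * (c2 * Y)" by (simp add: ac_simps)
  then have "c2 * (S - A) = c1 * (B - S)" using assms by simp
  then have "c2 * S - c2 * A - (c1 * B - c1 * S) = 0" by (simp add: algebra_simps)
  then show ?thesis by (simp add: algebra_simps)
qed


lemma ring_aux: "(a::'a::comm_ring) * (b*(p*q1) + c*(p*q2)) = p*(a*(b*q1 + c*q2))"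
  by (simp add: algebra_simps)

lemma pos_exists: "pos Q \<Longrightarrow> \<exists>k. fps_nth Q k > 0"
proof -
  assume p: "pos Q"
  then have "Q \<noteq> 0" by (simp add: pos_def)
  then obtain k where "fps_nth Q k \<noteq> 0" by (metis fps_ext fps_zero_nth)
  then show ?thesis using p unfolding pos_def by (metis order_le_less)
qed

lemma GG_core_aux:
  "\<forall>S lo hi. finite S \<and> S \<subseteq> {lo..hi} \<and> 0 \<le> lo \<and> card S = Suc m \<and> nat (hi - lo) = s
     \<longrightarrow> (\<exists>Q. GG S = (1 - fps_X) ^ m * Q \<and> pos Q)"
proof (induction s rule: less_induct)
  case (less s)
  have IH: "\<And>s' S lo hi. s' < s \<Longrightarrow> finite S \<Longrightarrow> S \<subseteq> {lo..hi} \<Longrightarrow> 0 \<le> lo \<Longrightarrow> card S = Suc m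
     \<Longrightarrow> nat (hi - lo) = s' \<Longrightarrow> (\<exists>Q. GG S = (1 - fps_X) ^ m * Q \<and> pos Q)"
    using less.IH by blast
  show ?case
  proof (intro allI impI)
    fix S lo hi
    assume A: "finite S \<and> S \<subseteq> {lo..hi} \<and> 0 \<le> lo \<and> card S = Suc m \<and> nat (hi - lo) = s"
    then have fin: "finite S" and sub: "S \<subseteq> {lo..hi}" and lo0: "0 \<le> lo" and cS: "card S = Suc m"
      and sd: "nat (hi - lo) = s" by auto
    have ne: "S \<noteq> {}" using cS by auto
    then have lohi: "lo \<le> hi" using sub by auto
    show "\<exists>Q. GG S = (1 - fps_X) ^ m * Q \<and> pos Q"
    proof (cases "S = {lo..hi}")
      case True
      have "card {lo..hi} = nat (hi - lo) + 1" using lohi by simp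
      then have hm: "hi = lo + int m" using cS True lohi by simp
      define Q :: "real fps" where "Q = fps_const (1 / fact m) * fps_X ^ nat lo"
      have "GG S = (1 - fps_X) ^ m * Q" unfolding True hm GG_interval[OF lo0] Q_def by (simp add: ac_simps)
      moreover have "pos Q" unfolding pos_def
      proof
        show "\<forall>k. 0 \<le> fps_nth Q k" by (simp add: Q_def)
        have "fps_nth Q (nat lo) \<noteq> 0" by (simp add: Q_def)
        then show "Q \<noteq> 0" by auto
      qed
      ultimately show ?thesis by blast
    next
      case notint: False
      show ?thesis
      proof (cases "lo \<in> S")
        case False
        have "S \<subseteq> {lo+1..hi}"
        proof
          fix x assume "x \<in> S"
          then have "lo \<le> x" "x \<le> hi" "x \<noteq> lo" using sub False by auto
          then show "x \<in> {lo+1..hi}" by simp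
        qed
        moreover have "lo + 1 \<le> hi" using ne \<open>S \<subseteq> {lo+1..hi}\<close> by auto
        moreover have "nat (hi - (lo+1)) < s" using sd \<open>lo + 1 \<le> hi\<close> by simp
        ultimately show ?thesis using IH[of "nat (hi - (lo+1))" S "lo+1" hi] fin lo0 cS by simp
      next
        case lS: True
        show ?thesis
        proof (cases "hi \<in> S")
          case False
          have "S \<subseteq> {lo..hi-1}"
          proof
            fix x assume "x \<in> S"
            then have "lo \<le> x" "x \<le> hi" "x \<noteq> hi" using sub False by auto
            then show "x \<in> {lo..hi-1}" by simp
          qed
          moreover have "lo \<le> hi - 1" using ne \<open>S \<subseteq> {lo..hi-1}\<close> by auto
          moreover have "nat (hi - 1 - lo) < s" using sd \<open>lo \<le> hi - 1\<close> by simp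
          ultimately show ?thesis using IH[of "nat (hi - 1 - lo)" S lo "hi - 1"] fin lo0 cS by simp
        next
          case hS: True
          obtain y where y: "y \<in> {lo..hi}" "y \<notin> S" using notint sub by blast
          have "y \<noteq> lo" "y \<noteq> hi" "lo \<le> y" "y \<le> hi" using y lS hS by auto
          then have ly: "lo < y" "y < hi" by simp_all
          define R where "R = S - {lo, hi}"
          define Y1 where "Y1 = insert y S - {lo}"
          define Y2 where "Y2 = insert y S - {hi}"
          have finR: "finite R" using fin by (simp add: R_def)
          have h1: "fps_const (real_of_int (y - lo)) * GG (insert lo (insert y (insert hi R))) =
             GG (insert lo (insert hi R)) - GG (insert y (insert hi R))"
            by (rule GG_rec) (use finR ly y in \<open>auto simp: R_def\<close>)
          have h2: "fps_const (real_of_int (hi - y)) * GG (insert y (insert hi (insert lo R))) =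
             GG (insert y (insert lo R)) - GG (insert hi (insert lo R))"
            by (rule GG_rec) (use finR ly y in \<open>auto simp: R_def\<close>)
          have s1: "insert lo (insert y (insert hi R)) = insert y S" "insert y (insert hi (insert lo R)) = insert y S"
            "insert lo (insert hi R) = S" "insert hi (insert lo R) = S"
            "insert y (insert hi R) = Y1" "insert y (insert lo R) = Y2"
            "insert lo Y1 = insert y S" "insert hi Y2 = insert y S" "insert y (insert lo S) = insert y S"
            using lS hS ly by (auto simp: R_def Y1_def Y2_def)
          have comb: "(fps_const (real_of_int (y - lo)) + fps_const (real_of_int (hi - y))) * GG S =
             fps_const (real_of_int (hi - y)) * GG Y1 + fps_const (real_of_int (y - lo)) * GG Y2"
            by (rule comb_alg[OF h1[unfolded s1] h2[unfolded s1]])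
          have lt1: "nat (hi - (lo+1)) < s" and lt2: "nat (hi - 1 - lo) < s" using sd ly by simp_all
          have cY: "card (insert y S) = Suc (Suc m)" using fin y cS by simp
          have "finite Y1 \<and> Y1 \<subseteq> {lo+1..hi} \<and> 0 \<le> lo+1 \<and> card Y1 = Suc m \<and> nat (hi - (lo+1)) = nat (hi - (lo+1))"
          proof (intro conjI)
            show "finite Y1" using fin by (simp add: Y1_def)
            show "card Y1 = Suc m" using cY lS by (simp add: Y1_def)
            show "Y1 \<subseteq> {lo+1..hi}"
            proof
              fix x assume "x \<in> Y1"
              then have "lo \<le> x" "x \<le> hi" "x \<noteq> lo" using sub ly by (auto simp: Y1_def)
              then show "x \<in> {lo+1..hi}" by simp
            qed
          qed (use lo0 in simp_all)
          then obtain Q1 where Q1: "GG Y1 = (1 - fps_X) ^ m * Q1" "pos Q1"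
            using IH[of "nat (hi - (lo+1))" Y1 "lo+1" hi] lt1 by blast
          have "finite Y2 \<and> Y2 \<subseteq> {lo..hi-1} \<and> 0 \<le> lo \<and> card Y2 = Suc m \<and> nat (hi - 1 - lo) = nat (hi - 1 - lo)"
          proof (intro conjI)
            show "finite Y2" using fin by (simp add: Y2_def)
            show "card Y2 = Suc m" using cY hS by (simp add: Y2_def)
            show "Y2 \<subseteq> {lo..hi-1}"
            proof
              fix x assume "x \<in> Y2"
              then have "lo \<le> x" "x \<le> hi" "x \<noteq> hi" using sub ly by (auto simp: Y2_def)
              then show "x \<in> {lo..hi-1}" by simp
            qed
          qed (use lo0 in simp_all)
          then obtain Q2 where Q2: "GG Y2 = (1 - fps_X) ^ m * Q2" "pos Q2"
            using IH[of "nat (hi - 1 - lo)" Y2 lo "hi - 1"] lt2 by blast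
          define c1 where "c1 = real_of_int (y - lo)"
          define c2 where "c2 = real_of_int (hi - y)"
          have c1p: "c1 > 0" and c2p: "c2 > 0" using ly by (auto simp: c1_def c2_def)
          define Q where "Q = fps_const (1 / (c1 + c2)) * (fps_const c2 * Q1 + fps_const c1 * Q2)"
          have comb': "fps_const (c1 + c2) * GG S = fps_const c2 * GG Y1 + fps_const c1 * GG Y2"
            using comb unfolding c1_def c2_def by simp
          have "GG S = fps_const (1 / (c1 + c2)) * (fps_const (c1 + c2) * GG S)"
            using c1p c2p by (simp add: mult.assoc[symmetric])
          also have "\<dots> = (1 - fps_X) ^ m * Q"
            unfolding comb' Q1 Q2 Q_def by (rule ring_aux)
          finally have eq: "GG S = (1 - fps_X) ^ m * Q" .
          have "pos Q" unfolding pos_def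
          proof
            show "\<forall>k. 0 \<le> fps_nth Q k" using Q1(2) Q2(2) c1p c2p by (simp add: Q_def pos_def)
            obtain k where k: "fps_nth Q1 k > 0" using pos_exists[OF Q1(2)] by blast
            have "fps_nth Q k > 0" using k Q2(2) c1p c2p
              by (simp add: Q_def pos_def add_pos_nonneg)
            then show "Q \<noteq> 0" by auto
          qed
          then show ?thesis using eq by blast
        qed
      qed
    qed
  qed
qed

lemma GG_core:
  assumes "finite S" "\<forall>x\<in>S. 0 \<le> x" "card S = Suc m"
  shows "\<exists>Q. GG S = (1 - fps_X) ^ m * Q \<and> pos Q"
proof -
  have ne: "S \<noteq> {}" using assms by auto
  have "S \<subseteq> {0..Max S}" using assms ne by auto
  then show ?thesis using GG_core_aux[of m "nat (Max S - 0)"] assms by blast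
qed


definition PP :: "int set \<Rightarrow> real" where "PP S = (\<Prod>x\<in>S-{0}. real_of_int x)"

definition Hs :: "nat \<Rightarrow> int set \<Rightarrow> real fps" where
  "Hs n S = fps_const (PP S) * GG S * inverse ((1 - fps_X) ^ n)"

lemma PP_pos: "finite S \<Longrightarrow> \<forall>x\<in>S. 0 \<le> x \<Longrightarrow> PP S > 0"
  unfolding PP_def by (rule prod_pos) auto

lemma nonneg_mult: "\<forall>k. fps_nth f k \<ge> (0::real) \<Longrightarrow> \<forall>k. fps_nth g k \<ge> 0 \<Longrightarrow> \<forall>k. fps_nth (f * g) k \<ge> 0"
  by (simp add: fps_mult_nth sum_nonneg)

lemma inv_one_minus_X: "inverse (1 - fps_X :: real fps) = Abs_fps (\<lambda>n. 1)"
proof -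
  have "inverse (inverse (Abs_fps (\<lambda>n. 1::real))) = Abs_fps (\<lambda>n. 1)" by simp
  then show ?thesis by (simp add: fps_inverse_gp')
qed

lemma nonneg_inv_pow: "\<forall>k. fps_nth (inverse ((1 - fps_X :: real fps) ^ m)) k \<ge> 0"
proof -
  have "\<forall>k. fps_nth ((Abs_fps (\<lambda>n. 1::real)) ^ m) k \<ge> 0"
    by (induction m) (simp_all add: nonneg_mult)
  then show ?thesis by (simp add: fps_inverse_power inv_one_minus_X)
qed

lemma inv_shift: "a \<le> n \<Longrightarrow> (1 - fps_X :: real fps) ^ a * inverse ((1 - fps_X) ^ n) = inverse ((1 - fps_X) ^ (n - a))"
proof -
  assume "a \<le> n"
  then have "(1 - fps_X :: real fps) ^ n = (1 - fps_X) ^ a * (1 - fps_X) ^ (n - a)"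
    by (simp add: power_add[symmetric])
  then have "(1 - fps_X :: real fps) ^ a * inverse ((1 - fps_X) ^ n)
     = ((1 - fps_X) ^ a * inverse ((1 - fps_X) ^ a)) * inverse ((1 - fps_X) ^ (n - a))"
    by (simp add: fps_inverse_mult mult.assoc)
  also have "(1 - fps_X :: real fps) ^ a * inverse ((1 - fps_X) ^ a) = 1"
    by (rule inverse_mult_eq_1') (simp add: fps_nth_power_0)
  finally show ?thesis by simp
qed

lemma pos_final:
  assumes "c > 0" "a \<le> n" "pos Q"
  shows "pos (fps_const c * ((1 - fps_X) ^ a * Q) * inverse ((1 - fps_X) ^ n))"
proof -
  have e: "fps_const c * ((1 - fps_X) ^ a * Q) * inverse ((1 - fps_X) ^ n) =
      fps_const c * Q * inverse ((1 - fps_X) ^ (n - a))"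
    using inv_shift[OF assms(2)] by (simp add: ac_simps)
  have nn: "\<forall>k. fps_nth (fps_const c * Q * inverse ((1 - fps_X :: real fps) ^ (n - a))) k \<ge> 0"
    apply (rule nonneg_mult)
     apply (rule nonneg_mult)
    using assms by (auto simp: pos_def nonneg_inv_pow)
  have "inverse ((1 - fps_X :: real fps) ^ (n - a)) \<noteq> 0"
  proof
    assume "inverse ((1 - fps_X :: real fps) ^ (n - a)) = 0"
    then have "fps_nth (inverse ((1 - fps_X :: real fps) ^ (n - a))) 0 = 0" by simp
    then show False by (simp add: fps_nth_power_0)
  qed
  moreover have "fps_const c \<noteq> 0" using assms by simp
  moreover have "Q \<noteq> 0" using assms by (simp add: pos_def)
  ultimately have "fps_const c * Q * inverse ((1 - fps_X :: real fps) ^ (n - a)) \<noteq> 0" by simp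
  then show ?thesis unfolding e pos_def using nn by blast
qed

lemma step_a:
  assumes fin: "finite S" and z: "0 \<in> S" and M: "M \<in> S" "M \<noteq> 0" and nn: "\<forall>x\<in>S. 0 \<le> x"
    and cS: "card S = Suc t" and tn: "t \<le> n"
  shows "pos (Hs n (S - {M}) - Hs n S)"
proof -
  define R where "R = S - {0, M}"
  have r: "fps_const (real_of_int (M - 0)) * GG (insert 0 (insert M R)) = GG (insert 0 R) - GG (insert M R)"
    by (rule GG_rec) (use fin M in \<open>auto simp: R_def\<close>)
  have s: "insert 0 (insert M R) = S" "insert 0 R = S - {M}" "insert M R = S - {0}" "insert 0 S = S"
    using z M by (auto simp: R_def)
  have r': "fps_const (real_of_int M) * GG S = GG (S - {M}) - GG (S - {0})" using r s by simp
  have pp: "PP S = PP (S - {M}) * real_of_int M"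
  proof -
    have "S - {0} = insert M (S - {M} - {0})" using M by auto
    then have "PP S = real_of_int M * (\<Prod>x\<in>S - {M} - {0}. real_of_int x)"
      unfolding PP_def using fin by (simp add: prod.insert)
    then show ?thesis by (simp add: PP_def)
  qed
  have "Hs n (S - {M}) - Hs n S = fps_const (PP (S - {M})) * (GG (S - {M}) - fps_const (real_of_int M) * GG S) * inverse ((1 - fps_X) ^ n)"
    unfolding Hs_def pp by (simp add: algebra_simps)
  also have "\<dots> = fps_const (PP (S - {M})) * GG (S - {0}) * inverse ((1 - fps_X) ^ n)"
    unfolding r' by simp
  finally have eq: "Hs n (S - {M}) - Hs n S = fps_const (PP (S - {M})) * GG (S - {0}) * inverse ((1 - fps_X) ^ n)" .
  have "card (S - {0}) = t" using cS z fin by simp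
  moreover have "t \<noteq> 0"
  proof
    assume "t = 0"
    then have "card S = 1" using cS by simp
    then show False using z M by (metis card_1_singletonE singletonD)
  qed
  ultimately have "card (S - {0}) = Suc (t - 1)" by simp
  then obtain Q where Q: "GG (S - {0}) = (1 - fps_X) ^ (t - 1) * Q" "pos Q"
    using GG_core[of "S - {0}" "t - 1"] fin nn by auto
  have "PP (S - {M}) > 0" using PP_pos[of "S - {M}"] fin nn by auto
  then show ?thesis unfolding eq Q(1) by (rule pos_final) (use tn Q(2) in auto)
qed

lemma alg_b:
  assumes "Ge = GS - (GU::'a::comm_ring_1)" "a1 * GU = GS - GS'" "pe = pt * a1" "ps = pt * (a1 - 1)"
  shows "pe * Ge - ps * GS = pt * GS'"
proof -
  have "pe * Ge - ps * GS = pt * GS - pt * (a1 * GU)" unfolding assms(1,3,4) by (simp add: algebra_simps)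
  then show ?thesis unfolding assms(2) by (simp add: algebra_simps)
qed

lemma step_b:
  assumes fin: "finite S" and z: "0 \<in> S" and aS: "a \<in> S" and a0: "a > 0" and a1: "a + 1 \<notin> S"
    and nn: "\<forall>x\<in>S. 0 \<le> x" and cS: "card S = Suc t" and tn: "t \<le> n"
  shows "pos (Hs n (insert (a + 1) (S - {a})) - Hs n S)"
proof -
  define T where "T = S - {0, a}"
  define e where "e = insert (a + 1) (S - {a})"
  define U where "U = insert (a + 1) S"
  define S' where "S' = insert (a + 1) (S - {0})"
  have finT: "finite T" using fin by (simp add: T_def)
  have r1: "fps_const (real_of_int (a + 1 - a)) * GG (insert a (insert (a+1) (insert 0 T))) =
     GG (insert a (insert 0 T)) - GG (insert (a+1) (insert 0 T))"
    by (rule GG_rec) (use finT a0 a1 in \<open>auto simp: T_def\<close>)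
  have r2: "fps_const (real_of_int (a + 1 - 0)) * GG (insert 0 (insert (a+1) (insert a T))) =
     GG (insert 0 (insert a T)) - GG (insert (a+1) (insert a T))"
    by (rule GG_rec) (use finT a0 a1 in \<open>auto simp: T_def\<close>)
  have s: "insert a (insert (a+1) (insert 0 T)) = U" "insert a (insert 0 T) = S" "insert (a+1) (insert 0 T) = e"
    "insert 0 (insert (a+1) (insert a T)) = U" "insert 0 (insert a T) = S" "insert (a+1) (insert a T) = S'"
    "insert a e = U" "insert 0 U = U" "insert 0 S' = U" "insert 0 S = S" "insert a S = S"
    using z aS a0 by (auto simp: T_def U_def e_def S'_def)
  have r1': "GG e = GG S - GG U" using r1 s by simp
  have r2': "fps_const (real_of_int (a + 1)) * GG U = GG S - GG S'" using r2 s by simp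
  have pe: "PP e = PP T * real_of_int (a + 1)"
  proof -
    have "e - {0} = insert (a+1) T" using a0 by (auto simp: e_def T_def)
    moreover have "a + 1 \<notin> T" using a1 by (auto simp: T_def)
    ultimately show ?thesis using finT by (simp add: PP_def T_def)
  qed
  have ps: "PP S = PP T * real_of_int a"
  proof -
    have "S - {0} = insert a T" using a0 aS by (auto simp: T_def)
    moreover have "a \<notin> T" by (auto simp: T_def)
    ultimately show ?thesis using finT by (simp add: PP_def T_def)
  qed
  have "fps_const (PP e) * GG e - fps_const (PP S) * GG S = fps_const (PP T) * GG S'"
    by (rule alg_b[OF r1' r2']) (simp_all add: pe ps algebra_simps)
  then have eq: "Hs n e - Hs n S = fps_const (PP T) * GG S' * inverse ((1 - fps_X) ^ n)"
    unfolding Hs_def by (metis left_diff_distrib)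
  have "card S' = Suc t" using cS z fin a1 by (simp add: S'_def)
  moreover have "\<forall>x\<in>S'. 0 \<le> x" using nn a0 by (auto simp: S'_def)
  ultimately obtain Q where Q: "GG S' = (1 - fps_X) ^ t * Q" "pos Q"
    using GG_core[of S' t] fin by (auto simp: S'_def)
  have "PP T > 0" using PP_pos[of T] finT nn by (auto simp: T_def)
  then show ?thesis unfolding e_def[symmetric] eq Q(1) by (rule pos_final) (use tn Q(2) in auto)
qed


definition okl :: "nat \<Rightarrow> int list \<Rightarrow> bool" where
  "okl n ds \<longleftrightarrow> strict_degs ds \<and> hd ds = 0 \<and> length ds \<le> n + 1"

lemma okl_facts:
  assumes "okl n ds"
  shows "distinct ds" "ds \<noteq> []" "ds ! 0 = 0" "sorted_wrt (<) ds" "length ds \<le> n + 1"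
    "\<forall>x\<in>set ds. 0 \<le> x" "card (set ds) = length ds" "0 \<in> set ds"
proof -
  show sw: "sorted_wrt (<) ds" and ne: "ds \<noteq> []" using assms by (auto simp: okl_def strict_degs_def)
  then show "distinct ds" by (simp add: strict_sorted_iff)
  then show "card (set ds) = length ds" by (simp add: distinct_card)
  show d0: "ds ! 0 = 0" using assms ne by (simp add: okl_def hd_conv_nth)
  show "length ds \<le> n + 1" using assms by (simp add: okl_def)
  show "0 \<in> set ds" using d0 ne by (metis length_greater_0_conv nth_mem)
  show "\<forall>x\<in>set ds. 0 \<le> x"
  proof
    fix x assume "x \<in> set ds"
    then obtain k where k: "k < length ds" "ds ! k = x" by (auto simp: in_set_conv_nth)
    show "0 \<le> x"
    proof (cases k)
      case 0 then show ?thesis using k d0 by simp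
    next
      case (Suc k') then show ?thesis using sorted_wrt_nth_less[OF sw, of 0 k] k d0 by simp
    qed
  qed
qed

lemma hilb_eq:
  assumes ok: "okl n ds"
  shows "hilbert_series n (norm_pure_diagram ds) = Hs n (set ds)"
proof -
  note F = okl_facts[OF ok]
  have bij1: "bij_betw (nth ds) {1..<length ds} (set ds - {0})"
    unfolding bij_betw_def
  proof
    show "inj_on (nth ds) {1..<length ds}" using F(1) by (simp add: inj_on_def nth_eq_iff_index_eq)
    show "nth ds ` {1..<length ds} = set ds - {0}"
    proof
      show "nth ds ` {1..<length ds} \<subseteq> set ds - {0}"
      proof (rule image_subsetI)
        fix k assume k: "k \<in> {1..<length ds}"
        have "ds ! k \<noteq> ds ! 0" using nth_eq_iff_index_eq[OF F(1), of k 0] k F(2) by auto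
        then show "ds ! k \<in> set ds - {0}" using k F(3) by auto
      qed
      show "set ds - {0} \<subseteq> nth ds ` {1..<length ds}"
      proof
        fix x assume "x \<in> set ds - {0}"
        then obtain k where k: "k < length ds" "ds ! k = x" "x \<noteq> 0" by (auto simp: in_set_conv_nth)
        then have "k \<noteq> 0" using F(3) by (cases "k = 0") auto
        then show "x \<in> nth ds ` {1..<length ds}" using k by (intro image_eqI[of _ _ k]) auto
      qed
    qed
  qed
  have Pi: "(\<Prod>k\<in>{1..<length ds}. real_of_int (ds ! k)) = PP (set ds)"
    unfolding PP_def by (rule prod.reindex_bij_betw[OF bij1])
  have coef: "(\<Sum>i\<le>n. (-1) ^ i * norm_pure_diagram ds i (int j)) = PP (set ds) * fps_nth (GG (set ds)) j" for j
  proof (cases "int j \<in> set ds")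
    case True
    then obtain i0 where i0: "i0 < length ds" "ds ! i0 = int j" by (auto simp: in_set_conv_nth)
    have bij2: "bij_betw (nth ds) {k. k < length ds \<and> k \<noteq> i0} (set ds - {int j})"
      unfolding bij_betw_def
    proof
      show "inj_on (nth ds) {k. k < length ds \<and> k \<noteq> i0}" using F(1) by (simp add: inj_on_def nth_eq_iff_index_eq)
      show "nth ds ` {k. k < length ds \<and> k \<noteq> i0} = set ds - {int j}"
      proof
        show "nth ds ` {k. k < length ds \<and> k \<noteq> i0} \<subseteq> set ds - {int j}"
        proof (rule image_subsetI)
          fix k assume k: "k \<in> {k. k < length ds \<and> k \<noteq> i0}"
          have "ds ! k \<noteq> ds ! i0" using nth_eq_iff_index_eq[OF F(1), of k i0] k i0 by auto
          then show "ds ! k \<in> set ds - {int j}" using k i0 by auto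
        qed
        show "set ds - {int j} \<subseteq> nth ds ` {k. k < length ds \<and> k \<noteq> i0}"
        proof
          fix x assume "x \<in> set ds - {int j}"
          then obtain k where k: "k < length ds" "ds ! k = x" "x \<noteq> int j" by (auto simp: in_set_conv_nth)
          then have "k \<noteq> i0" using i0 by auto
          then show "x \<in> nth ds ` {k. k < length ds \<and> k \<noteq> i0}" using k by (intro image_eqI[of _ _ k]) auto
        qed
      qed
    qed
    have pr: "(\<Prod>k\<in>{k. k < length ds \<and> k \<noteq> i0}. 1 / real_of_int (ds ! k - ds ! i0))
        = inverse (\<Prod>x\<in>set ds - {int j}. real_of_int (x - int j))"
    proof -
      have "(\<Prod>k\<in>{k. k < length ds \<and> k \<noteq> i0}. 1 / real_of_int (ds ! k - ds ! i0))
          = (\<Prod>k\<in>{k. k < length ds \<and> k \<noteq> i0}. inverse (real_of_int (ds ! k - int j)))"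
        using i0 by (simp add: divide_inverse)
      also have "\<dots> = (\<Prod>x\<in>set ds - {int j}. inverse (real_of_int (x - int j)))"
        by (rule prod.reindex_bij_betw[OF bij2])
      also have "\<dots> = inverse (\<Prod>x\<in>set ds - {int j}. real_of_int (x - int j))"
        using prod_inversef[of "\<lambda>x. real_of_int (x - int j)" "set ds - {int j}"] by (simp add: o_def)
      finally show ?thesis .
    qed
    have sg: "((-1::real) ^ i0) * (-1) ^ i0 = 1" by (simp add: power_mult_distrib[symmetric])
    have "\<forall>i\<in>{..n}. (-1) ^ i * norm_pure_diagram ds i (int j) =
        (if i = i0 then PP (set ds) * inverse (\<Prod>x\<in>set ds - {int j}. real_of_int (x - int j)) else 0)"
    proof
      fix i assume "i \<in> {..n}"
      show "(-1) ^ i * norm_pure_diagram ds i (int j) =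
        (if i = i0 then PP (set ds) * inverse (\<Prod>x\<in>set ds - {int j}. real_of_int (x - int j)) else 0)"
      proof (cases "i = i0")
        case True
        then show ?thesis unfolding norm_pure_diagram_def pure_diagram_def Pi using i0 pr sg
          by (simp add: mult_ac)
      next
        case False
        have "\<not> (i < length ds \<and> int j = ds ! i)" using False i0 F(1) by (auto simp: nth_eq_iff_index_eq)
        then have "pure_diagram ds i (int j) = 0" unfolding pure_diagram_def by (rule if_not_P)
        then show ?thesis using False unfolding norm_pure_diagram_def by simp
      qed
    qed
    then have "(\<Sum>i\<le>n. (-1) ^ i * norm_pure_diagram ds i (int j)) =
        (\<Sum>i\<le>n. (if i = i0 then PP (set ds) * inverse (\<Prod>x\<in>set ds - {int j}. real_of_int (x - int j)) else 0))"
      by (intro sum.cong refl) blast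
    also have "\<dots> = PP (set ds) * inverse (\<Prod>x\<in>set ds - {int j}. real_of_int (x - int j))"
      using i0 F(5) by simp
    finally show ?thesis using True by (simp add: GG_nth)
  next
    case False
    have "\<forall>i\<in>{..n}. pure_diagram ds i (int j) = 0"
    proof
      fix i
      have "\<not> (i < length ds \<and> int j = ds ! i)" using False nth_mem by auto
      then show "pure_diagram ds i (int j) = 0" unfolding pure_diagram_def by (rule if_not_P)
    qed
    then have "\<forall>i\<in>{..n}. (-1) ^ i * norm_pure_diagram ds i (int j) = 0"
      unfolding norm_pure_diagram_def by simp
    then show ?thesis using False by (simp add: GG_nth)
  qed
  show ?thesis unfolding hilbert_series_def Hs_def
    by (rule arg_cong[where f = "\<lambda>x. x * _"], rule fps_ext) (simp add: coef)
qed


lemma pos_add: "pos x \<Longrightarrow> pos y \<Longrightarrow> pos (x + y)"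
proof -
  assume px: "pos x" and py: "pos y"
  obtain k where k: "fps_nth x k > 0" using pos_exists[OF px] by blast
  have nn: "\<forall>k. fps_nth (x + y) k \<ge> 0" using px py by (simp add: pos_def)
  have "fps_nth (x + y) k > 0" using k py by (simp add: pos_def add_pos_nonneg)
  then have "x + y \<noteq> 0" by (metis fps_zero_nth less_irrefl)
  then show ?thesis using nn by (simp add: pos_def)
qed

definition mu :: "int list \<Rightarrow> int list \<Rightarrow> nat" where
  "mu ds' ds = (length ds - length ds') + (\<Sum>i<length ds'. nat (ds' ! i - ds ! i))"

lemma chain_aux:
  assumes ok': "okl n ds'"
  shows "\<forall>ds. okl n ds \<and> degs_le ds ds' \<and> mu ds' ds = k \<longrightarrow> ds = ds' \<or> pos (Hs n (set ds') - Hs n (set ds))"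
proof (induction k rule: less_induct)
  case (less k)
  have IH: "\<And>ds. mu ds' ds < k \<Longrightarrow> okl n ds \<Longrightarrow> degs_le ds ds' \<Longrightarrow> ds = ds' \<or> pos (Hs n (set ds') - Hs n (set ds))"
    using less.IH by blast
  have comb: "ds = ds' \<or> pos (Hs n (set ds') - Hs n (set ds))"
    if "es = ds' \<or> pos (Hs n (set ds') - Hs n (set es))" "pos (Hs n (set es) - Hs n (set ds))" for es ds
  proof -
    have "Hs n (set ds') - Hs n (set ds) = (Hs n (set ds') - Hs n (set es)) + (Hs n (set es) - Hs n (set ds))"
      by simp
    then show ?thesis using that pos_add by fastforce
  qed
  note F' = okl_facts[OF ok']
  show ?case
  proof (intro allI impI)
    fix ds assume A: "okl n ds \<and> degs_le ds ds' \<and> mu ds' ds = k"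
    then have ok: "okl n ds" and le: "degs_le ds ds'" and mk: "mu ds' ds = k" by auto
    note F = okl_facts[OF ok]
    have len: "length ds' \<le> length ds" and lei: "\<forall>i<length ds'. ds ! i \<le> ds' ! i"
      using le by (auto simp: degs_le_def)
    show "ds = ds' \<or> pos (Hs n (set ds') - Hs n (set ds))"
    proof (cases "length ds' < length ds")
      case True
      define bs where "bs = butlast ds"
      define M where "M = last ds"
      have dsb: "ds = bs @ [M]" using F(2) by (simp add: bs_def M_def)
      have lb: "length bs = length ds - 1" by (simp add: bs_def)
      have l2: "length ds \<ge> 2" using True F'(2) by (cases ds') auto
      have bne: "bs \<noteq> []" using lb l2 by auto
      have swb: "sorted_wrt (<) bs" using F(4) dsb by (metis sorted_wrt_append)
      have nthb: "bs ! i = ds ! i" if "i < length bs" for i using that by (simp add: bs_def nth_butlast)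
      have okb: "okl n bs"
      proof -
        have "hd bs = hd ds" using dsb bne by (metis hd_append2)
        then show ?thesis using ok swb bne lb by (auto simp: okl_def strict_degs_def)
      qed
      have leb: "degs_le bs ds'" using len True lei nthb lb by (auto simp: degs_le_def)
      have "mu ds' bs < mu ds' ds"
      proof -
        have "(\<Sum>i<length ds'. nat (ds' ! i - bs ! i)) = (\<Sum>i<length ds'. nat (ds' ! i - ds ! i))"
          using nthb lb True by (intro sum.cong refl) auto
        then show ?thesis using lb True unfolding mu_def by simp
      qed
      then have ih: "bs = ds' \<or> pos (Hs n (set ds') - Hs n (set bs))" using IH okb leb mk by blast
      have Mnb: "M \<notin> set bs" using F(1) dsb by auto
      have setb: "set bs = set ds - {M}" using dsb Mnb by auto
      have M0: "M \<noteq> 0"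
      proof -
        have "M = ds ! (length ds - 1)" using F(2) by (simp add: M_def last_conv_nth)
        moreover have "ds ! 0 < ds ! (length ds - 1)" using sorted_wrt_nth_less[OF F(4), of 0 "length ds - 1"] l2 by simp
        ultimately show ?thesis using F(3) by simp
      qed
      have MS: "M \<in> set ds" using F(2) by (simp add: M_def)
      have "pos (Hs n (set ds - {M}) - Hs n (set ds))"
        by (rule step_a[where t = "length ds - 1"]) (use F MS M0 l2 in auto)
      then show ?thesis using comb[OF ih] setb by simp
    next
      case False
      then have leq: "length ds = length ds'" using len by simp
      show ?thesis
      proof (cases "ds = ds'")
        case True then show ?thesis by simp
      next
        case neq: False
        define I where "I = {i. i < length ds \<and> ds ! i < ds' ! i}"
        have "I \<noteq> {}"
        proof
          assume "I = {}"
          then have "\<forall>i<length ds. ds ! i = ds' ! i" using lei leq by (force simp: I_def)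
          then have "ds = ds'" using leq by (simp add: nth_equalityI)
          then show False using neq by simp
        qed
        have finI: "finite I" by (simp add: I_def)
        define i where "i = Max I"
        have iI: "i \<in> I" using finI \<open>I \<noteq> {}\<close> by (simp add: i_def)
        have imax: "\<And>q. q \<in> I \<Longrightarrow> q \<le> i" using finI by (simp add: i_def)
        have il: "i < length ds" and ilt: "ds ! i < ds' ! i" using iI by (auto simp: I_def)
        have i0: "i \<noteq> 0" using ilt F(3) F'(3) by (cases "i = 0") auto
        have above: "ds ! q = ds' ! q" if "i < q" "q < length ds" for q
        proof -
          have "q \<notin> I" using imax that by fastforce
          then show ?thesis using lei leq that by (force simp: I_def)
        qed
        define a where "a = ds ! i"
        have a0: "a > 0" using sorted_wrt_nth_less[OF F(4), of 0 i] i0 il F(3) by (simp add: a_def)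
        have gtq: "ds ! q > a + 1" if "i < q" "q < length ds" for q
        proof -
          have "ds' ! i < ds' ! q" using sorted_wrt_nth_less[OF F'(4), of i q] that leq by simp
          then show ?thesis using above[OF that] ilt by (simp add: a_def)
        qed
        have a1: "a + 1 \<notin> set ds"
        proof
          assume "a + 1 \<in> set ds"
          then obtain q where q: "q < length ds" "ds ! q = a + 1" by (auto simp: in_set_conv_nth)
          show False
          proof (cases "q \<le> i")
            case True
            then have "ds ! q \<le> a"
              using sorted_wrt_nth_less[OF F(4), of q i] il by (cases "q = i") (auto simp: a_def)
            then show False using q by simp
          next
            case False
            then show False using gtq[of q] q by simp
          qed
        qed
        define e where "e = ds[i := a + 1]"
        have le_e: "length e = length ds" by (simp add: e_def)
        have nthe: "e ! q = (if q = i then a + 1 else ds ! q)" if "q < length ds" for q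
          using that by (simp add: e_def)
        have swe: "sorted_wrt (<) e"
          unfolding sorted_wrt_iff_nth_less
        proof (intro allI impI)
          fix p q assume pq: "p < q" "q < length e"
          have dpq: "ds ! p < ds ! q" using sorted_wrt_nth_less[OF F(4) pq(1)] pq le_e by simp
          show "e ! p < e ! q"
          proof (cases "p = i")
            case True
            then show ?thesis using gtq[of q] pq le_e nthe by auto
          next
            case pi: False
            show ?thesis
            proof (cases "q = i")
              case True
              then show ?thesis using pi pq le_e nthe dpq by (auto simp: a_def)
            next
              case False
              then show ?thesis using pi pq le_e nthe dpq by auto
            qed
          qed
        qed
        have oke: "okl n e"
        proof -
          have "e \<noteq> []" using F(2) le_e by auto
          moreover have "hd e = 0" using \<open>e \<noteq> []\<close> nthe[of 0] i0 F(2) F(3) by (simp add: hd_conv_nth)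
          ultimately show ?thesis using swe le_e F(5) by (simp add: okl_def strict_degs_def)
        qed
        have lee: "degs_le e ds'"
          unfolding degs_le_def using le_e leq nthe lei ilt by (auto simp: a_def)
        have "mu ds' e < mu ds' ds"
        proof -
          have "(\<Sum>q<length ds'. nat (ds' ! q - e ! q)) < (\<Sum>q<length ds'. nat (ds' ! q - ds ! q))"
          proof (rule sum_strict_mono_ex1)
            show "\<forall>q\<in>{..<length ds'}. nat (ds' ! q - e ! q) \<le> nat (ds' ! q - ds ! q)"
              using nthe leq by (auto simp: a_def)
            show "\<exists>q\<in>{..<length ds'}. nat (ds' ! q - e ! q) < nat (ds' ! q - ds ! q)"
              using nthe leq il ilt by (auto simp: a_def intro!: bexI[of _ i])
          qed simp
          then show ?thesis using le_e leq unfolding mu_def by simp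
        qed
        then have ih: "e = ds' \<or> pos (Hs n (set ds') - Hs n (set e))" using IH oke lee mk by blast
        have sete: "set e = insert (a + 1) (set ds - {a})"
          unfolding e_def a_def using set_update_distinct[OF F(1) il] by simp
        have "pos (Hs n (insert (a + 1) (set ds - {a})) - Hs n (set ds))"
          by (rule step_b[where t = "length ds - 1"]) (use F a0 a1 il in \<open>auto simp: a_def\<close>)
        then show ?thesis using comb[OF ih] sete by simp
      qed
    qed
  qed
qed

theorem proposition4p4:
  fixes n :: nat and ds ds' :: "int list"
  assumes "n \<ge> 1"
    and "strict_degs ds" and "hd ds = 0" and "length ds \<le> n + 1"
    and "strict_degs ds'" and "hd ds' = 0" and "length ds' \<le> n + 1"
    and "degs_less ds ds'"
  shows "hilbert_series n (norm_pure_diagram ds') - hilbert_series n (norm_pure_diagram ds) \<noteq> 0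
         \<and> (\<forall>k. fps_nth (hilbert_series n (norm_pure_diagram ds')
                         - hilbert_series n (norm_pure_diagram ds)) k \<ge> 0)"
proof -
  have ok: "okl n ds" and ok': "okl n ds'" using assms by (simp_all add: okl_def)
  have le: "degs_le ds ds'" and ne: "ds \<noteq> ds'" using assms(8) by (simp_all add: degs_less_def)
  have "pos (Hs n (set ds') - Hs n (set ds))"
    using chain_aux[OF ok', of "mu ds' ds"] ok le ne by blast
  then show ?thesis unfolding hilb_eq[OF ok] hilb_eq[OF ok'] pos_def by blast
qed

end
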